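(* Let $A$ and $B$ be cofinite directed posets of infinite height. Then the poset of strictly increasing functions $B\to A$, ordered by $\alpha'\geq\alpha$ iff $\alpha'(b)\geq\alpha(b)$ for all $b\in B$, is directed and of infinite height.
   Context: A poset is cofinite if for every $x$ the set $\{z\mid z\le x\}$ is finite; directed if it is nonempty and any two elements have a common upper bound; of infinite height if for every $a$ there is $a'$ with $a<a'$. *)

theory Defs
  imports Main
begin

text \<open>Posets are types of class order. Properties are stated relative to a carrier set S
  with the ambient order, so they apply both to whole types (S = UNIV) and to subposets.\<close>

definition cofinite_poset :: "'a::order set \<Rightarrow> bool" where
  "cofinite_poset S \<longleftrightarrow> (\<forall>x\<in>S. finite {z\<in>S. z \<le> x})"

definition directed_poset :: "'a::order set \<Rightarrow> bool" where
  "directed_poset S \<longleftrightarrow> S \<noteq> {} \<and> (\<forall>x\<in>S. \<forall>y\<in>S. \<exists>z\<in>S. x \<le> z \<and> y \<le> z)"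

definition infinite_height :: "'a::order set \<Rightarrow> bool" where
  "infinite_height S \<longleftrightarrow> (\<forall>a\<in>S. \<exists>a'\<in>S. a < a')"

end

theory Submission
  imports Defs
begin

lemma ub_finite:
  assumes d: "directed_poset (UNIV :: 'a::order set)" and f: "finite (X :: 'a set)"
  shows "\<exists>u. \<forall>x\<in>X. x \<le> u"
  using f
proof (induction X rule: finite_induct)
  case empty
  then show ?case by simp
next
  case (insert x F)
  then obtain u where u: "\<forall>y\<in>F. y \<le> u" by blast
  from d obtain z where "x \<le> z" "u \<le> z" unfolding directed_poset_def by blast
  then show ?case using u order_trans by blast
qed

lemma strict_ub_finite:
  assumes d: "directed_poset (UNIV :: 'a::order set)" and ih: "infinite_height (UNIV :: 'a set)"
    and f: "finite (X :: 'a set)"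
  shows "\<exists>u. \<forall>x\<in>X. x < u"
proof -
  obtain u where u: "\<forall>x\<in>X. x \<le> u" using ub_finite[OF d f] by blast
  obtain v where "u < v" using ih unfolding infinite_height_def by blast
  then show ?thesis using u order_le_less_trans by blast
qed

lemma wf_less_cof:
  assumes c: "cofinite_poset (UNIV :: 'b::order set)"
  shows "wf {(x::'b, y). x < y}"
proof (rule wf_subset[OF wf_measure[of "\<lambda>x. card {z. z < x}"]])
  show "{(x::'b, y). x < y} \<subseteq> measure (\<lambda>x. card {z. z < x})"
  proof clarify
    fix x y :: 'b assume xy: "x < y"
    have fin: "finite {z. z < y}"
    proof (rule finite_subset)
      show "finite {z \<in> UNIV. z \<le> y}" using c unfolding cofinite_poset_def by blast
    qed auto
    have "{z. z < x} \<subset> {z. z < y}" using xy by auto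
    then have "card {z. z < x} < card {z. z < y}" using fin psubset_card_mono by blast
    then show "(x, y) \<in> measure (\<lambda>x. card {z. z < x})" by simp
  qed
qed

definition H :: "('b::order \<Rightarrow> 'a::order) \<Rightarrow> ('b \<Rightarrow> 'a) \<Rightarrow> 'b \<Rightarrow> 'a" where
  "H h F b = (SOME u. h b < u \<and> (\<forall>b'. b' < b \<longrightarrow> F b' < u))"

lemma main_construct:
  assumes c: "cofinite_poset (UNIV :: 'b::order set)"
    and d: "directed_poset (UNIV :: 'a::order set)" and ih: "infinite_height (UNIV :: 'a set)"
  shows "\<exists>g :: 'b \<Rightarrow> 'a. strict_mono g \<and> (\<forall>b. h b < g b)"
proof -
  define r where "r = {(x::'b, y). x < y}"
  have wf: "wf r" using wf_less_cof[OF c] r_def by simp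
  define g where "g = wfrec r (H h)"
  have geq: "g b = H h (cut g r b) b" for b
    unfolding g_def by (rule wfrec[OF wf])
  have key: "h b < g b \<and> (\<forall>b'. b' < b \<longrightarrow> g b' < g b)" for b
  proof -
    have fin: "finite {z::'b. z < b}"
    proof (rule finite_subset)
      show "finite {z \<in> UNIV. z \<le> b}" using c unfolding cofinite_poset_def by blast
    qed auto
    obtain u where u: "\<forall>x\<in>insert (h b) (g ` {z. z < b}). x < u"
      using strict_ub_finite[OF d ih, of "insert (h b) (g ` {z. z < b})"] fin by auto
    have ex: "\<exists>u. h b < u \<and> (\<forall>b'. b' < b \<longrightarrow> cut g r b b' < u)"
    proof (intro exI conjI allI impI)
      show "h b < u" using u by simp
      fix b' assume "b' < b"
      then show "cut g r b b' < u" using u by (simp add: cut_apply r_def)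
    qed
    have "h b < g b \<and> (\<forall>b'. b' < b \<longrightarrow> cut g r b b' < g b)"
    proof -
      have "H h (cut g r b) b = (SOME u. h b < u \<and> (\<forall>b'. b' < b \<longrightarrow> cut g r b b' < u))"
        by (simp only: H_def)
      then have "h b < H h (cut g r b) b \<and> (\<forall>b'. b' < b \<longrightarrow> cut g r b b' < H h (cut g r b) b)"
        using someI_ex[OF ex] by simp
      then show ?thesis unfolding geq[of b, symmetric] .
    qed
    moreover have "\<And>b'. b' < b \<Longrightarrow> cut g r b b' = g b'" by (simp add: cut_apply r_def)
    ultimately show ?thesis by metis
  qed
  have "strict_mono g" unfolding strict_mono_def using key by blast
  then show ?thesis using key by blast
qed

theorem lemma3p17:
  assumes "cofinite_poset (UNIV :: 'a::order set)" "directed_poset (UNIV :: 'a set)"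
    "infinite_height (UNIV :: 'a set)"
  and "cofinite_poset (UNIV :: 'b::order set)" "directed_poset (UNIV :: 'b set)"
    "infinite_height (UNIV :: 'b set)"
  shows "directed_poset {f :: 'b \<Rightarrow> 'a. strict_mono f}
     \<and> infinite_height {f :: 'b \<Rightarrow> 'a. strict_mono f}"
proof
  note mc = main_construct[OF assms(4) assms(2) assms(3)]
  show "directed_poset {f :: 'b \<Rightarrow> 'a. strict_mono f}"
    unfolding directed_poset_def
  proof
    obtain g :: "'b \<Rightarrow> 'a" where "strict_mono g" using mc[of "\<lambda>_. undefined"] by blast
    then show "{f :: 'b \<Rightarrow> 'a. strict_mono f} \<noteq> {}" by blast
  next
    show "\<forall>x\<in>{f :: 'b \<Rightarrow> 'a. strict_mono f}. \<forall>y\<in>{f. strict_mono f}. \<exists>z\<in>{f. strict_mono f}. x \<le> z \<and> y \<le> z"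
    proof clarify
      fix x y :: "'b \<Rightarrow> 'a"
      have "\<forall>b. \<exists>u. x b \<le> u \<and> y b \<le> u" using assms(2) unfolding directed_poset_def by blast
      then obtain h where h: "\<forall>b. x b \<le> h b \<and> y b \<le> h b" by (auto dest: choice)
      obtain g where g: "strict_mono g" "\<forall>b. h b < g b" using mc[of h] by blast
      have "x b \<le> g b \<and> y b \<le> g b" for b
        using h[rule_format, of b] g(2)[rule_format, of b]
        by (metis order_le_less_trans less_imp_le)
      then have "x \<le> g \<and> y \<le> g" by (simp add: le_fun_def)
      then show "\<exists>z\<in>{f. strict_mono f}. x \<le> z \<and> y \<le> z" using g(1) by blast
    qed
  qed
next
  note mc = main_construct[OF assms(4) assms(2) assms(3)]
  show "infinite_height {f :: 'b \<Rightarrow> 'a. strict_mono f}"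
    unfolding infinite_height_def
  proof clarify
    fix f :: "'b \<Rightarrow> 'a"
    obtain g where g: "strict_mono g" "\<forall>b. f b < g b" using mc[of f] by blast
    have "f \<le> g" unfolding le_fun_def using g(2) less_imp_le by blast
    moreover have "\<not> g \<le> f"
    proof
      assume "g \<le> f"
      then have "g undefined \<le> f undefined" by (simp add: le_fun_def)
      then show False using g(2) leD by blast
    qed
    ultimately have "f < g" by (simp add: less_le_not_le)
    then show "\<exists>a'\<in>{f. strict_mono f}. f < a'" using g(1) by blast
  qed
qed

end
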